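(* Let $h,k$ be integers with $k>0$, $\gcd(h,k)=1$ and $h+k$ odd. Then $$B_{1}(h,k)=2(1-h)\bigl(s(h,k)-2s(h+k,2k)\bigr).$$
   Context: $[x]$ denotes the greatest integer $\le x$, and $((x))=x-[x]-\tfrac12$ if $x\notin\mathbb{Z}$, $((x))=0$ if $x\in\mathbb{Z}$. For integers $a,b$ with $b>0$: the Dedekind sum is $s(a,b)=\sum_{j=1}^{b-1}\left(\left(\frac{aj}{b}\right)\right)\left(\left(\frac{j}{b}\right)\right)$, and (for $\gcd(a,b)=1$) $$B_{1}(a,b)=\sum_{j=1}^{b-1}(-1)^{j+\left[\frac{aj}{b}\right]}\left[\frac{aj}{b}\right].$$ *)

theory Defs
  imports Complex_Main
begin

definition sawtooth :: "real \<Rightarrow> real" where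
  "sawtooth x = (if x \<in> \<int> then 0 else x - of_int \<lfloor>x\<rfloor> - 1/2)"

definition dedekind_sum :: "int \<Rightarrow> int \<Rightarrow> real" where
  "dedekind_sum a b = (\<Sum>j\<in>{1..b-1}. sawtooth (of_int (a*j) / of_int b) * sawtooth (of_int j / of_int b))"

definition B1 :: "int \<Rightarrow> int \<Rightarrow> int" where
  "B1 a b = (\<Sum>j\<in>{1..b-1}. (-1) ^ nat (j + \<lfloor>of_int (a*j) / (of_int b :: real)\<rfloor> mod 2)
                              * \<lfloor>of_int (a*j) / (of_int b :: real)\<rfloor>)"

end

theory Submission imports Defs begin

lemma saw_shift: "sawtooth (x + of_int n) = sawtooth x"
proof -
  have "x + of_int n \<in> \<int> \<longleftrightarrow> x \<in> \<int>"
    by (metis Ints_add Ints_diff Ints_of_int add_diff_cancel_right')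
  then show ?thesis unfolding sawtooth_def by auto
qed

lemma saw_neg: "sawtooth (- x) = - sawtooth x"
proof (cases "x \<in> \<int>")
  case True then show ?thesis unfolding sawtooth_def by auto
next
  case False
  then have "- x \<notin> \<int>" by (metis Ints_minus minus_minus)
  moreover have "\<lfloor>-x\<rfloor> = - \<lfloor>x\<rfloor> - 1"
  proof -
    have "of_int \<lfloor>x\<rfloor> \<noteq> x" using False by (metis Ints_of_int)
    then have f1: "of_int \<lfloor>x\<rfloor> < x" and f2: "x < of_int \<lfloor>x\<rfloor> + 1"
      using of_int_floor_le[of x] real_of_int_floor_add_one_gt[of x] by linarith+
    show ?thesis unfolding floor_eq_iff of_int_diff of_int_minus of_int_1 using f1 f2 by linarith
  qed
  ultimately show ?thesis using False unfolding sawtooth_def by auto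
qed

lemma sum_saw_zero:
  fixes a k :: int assumes "k > 0"
  shows "(\<Sum>j\<in>{1..k-1}. sawtooth (of_int (a*j) / of_int k)) = 0"
proof -
  let ?f = "\<lambda>j. sawtooth (of_int (a*j) / of_int k)"
  have "(\<Sum>j\<in>{1..k-1}. ?f j) = (\<Sum>j\<in>{1..k-1}. ?f (k - j))"
    by (rule sum.reindex_bij_witness[of _ "\<lambda>j. k - j" "\<lambda>j. k - j"]) auto
  also have "\<dots> = (\<Sum>j\<in>{1..k-1}. - ?f j)"
  proof (rule sum.cong)
    fix j assume "j \<in> {1..k-1}"
    have eq: "of_int (a*(k-j)) / of_int k = - (of_int (a*j) / of_int k) + (of_int a :: real)"
      using assms by (simp add: field_simps)
    have "?f (k - j) = sawtooth (- (of_int (a*j) / of_int k) + (of_int a :: real))"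
      by (simp only: eq)
    then show "?f (k - j) = - ?f j" by (simp only: saw_shift saw_neg)
  qed simp
  also have "\<dots> = - (\<Sum>j\<in>{1..k-1}. ?f j)" by (rule sum_negf)
  finally show ?thesis by linarith
qed

lemma frac_not_int: "0 < (x::real) \<Longrightarrow> x < 1 \<Longrightarrow> x \<notin> \<int>"
proof
  assume "0 < x" "x < 1" "x \<in> \<int>"
  then obtain n where n: "x = of_int n" by (auto elim: Ints_cases)
  then have "0 < n" "n < 1" using \<open>0 < x\<close> \<open>x < 1\<close> by simp_all
  then show False by simp
qed

lemma saw_small: "0 < (x::real) \<Longrightarrow> x < 1 \<Longrightarrow> sawtooth x = x - 1/2"
proof -
  assume a: "0 < x" "x < 1"
  then have "\<lfloor>x\<rfloor> = 0" by (simp add: floor_eq_iff)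
  then show ?thesis using frac_not_int[OF a] unfolding sawtooth_def by simp
qed

lemma ded_alt:
  fixes a k :: int assumes "k > 0"
  shows "dedekind_sum a k = (\<Sum>j\<in>{1..k-1}. (of_int j / of_int k) * sawtooth (of_int (a*j) / of_int k))"
proof -
  have "dedekind_sum a k = (\<Sum>j\<in>{1..k-1}. (of_int j / of_int k) * sawtooth (of_int (a*j) / of_int k)
        - (1/2) * sawtooth (of_int (a*j) / of_int k))"
    unfolding dedekind_sum_def
  proof (rule sum.cong)
    fix j assume j: "j \<in> {1..k-1}"
    have sj: "sawtooth (of_int j / of_int k) = of_int j / of_int k - 1/2"
      using j assms by (intro saw_small) (auto simp: field_simps)
    then show "sawtooth (of_int (a*j) / of_int k) * sawtooth (of_int j / of_int k) =
      (of_int j / of_int k) * sawtooth (of_int (a*j) / of_int k) - (1/2) * sawtooth (of_int (a*j) / of_int k)"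
      by (simp only: sj) (simp add: algebra_simps)
  qed simp
  also have "\<dots> = (\<Sum>j\<in>{1..k-1}. (of_int j / of_int k) * sawtooth (of_int (a*j) / of_int k))
        - (1/2) * (\<Sum>j\<in>{1..k-1}. sawtooth (of_int (a*j) / of_int k))"
    by (simp add: sum_subtractf sum_distrib_left)
  finally show ?thesis using sum_saw_zero[OF assms] by simp
qed

lemma not_int:
  fixes h k j :: int assumes "k > 0" "gcd h k = 1" "1 \<le> j" "j \<le> k - 1"
  shows "of_int (h*j) / of_int k \<notin> (\<int> :: real set)"
proof
  assume "of_int (h*j) / of_int k \<in> (\<int> :: real set)"
  then obtain n where "of_int (h*j) / of_int k = (of_int n :: real)" by (auto elim: Ints_cases)
  then have "(of_int (h*j) :: real) = of_int (n * k)" using assms by (simp add: field_simps)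
  then have "h * j = n * k" by (simp only: of_int_eq_iff)
  then have "k dvd h * j" by simp
  moreover have "coprime k h" using assms by (simp add: coprime_iff_gcd_eq_1 gcd.commute)
  ultimately have "k dvd j" by (simp add: coprime_dvd_mult_right_iff)
  then show False using assms zdvd_imp_le by fastforce
qed

lemma half_saw:
  fixes y :: real assumes "y \<notin> \<int>"
  shows "sawtooth (y/2) + sawtooth (y/2 + 1/2) = sawtooth y"
    and "sawtooth (y/2 + 1/2) - sawtooth (y/2) = (if even \<lfloor>y\<rfloor> then 1/2 else -1/2)"
proof -
  define n where "n = \<lfloor>y\<rfloor>"
  have n1: "of_int n \<le> y" and n2: "y < of_int n + 1" unfolding n_def by linarith+
  have ny: "of_int n \<noteq> y" using assms n_def by auto
  have i1: "y/2 \<notin> \<int>"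
    by (metis Ints_add assms field_sum_of_halves)
  have i2: "y/2 + 1/2 \<notin> \<int>"
  proof
    assume yi: "y/2 + 1/2 \<in> \<int>"
    have "(y/2 + 1/2) + (y/2+1/2) - 1 \<in> \<int>" by (rule Ints_diff[OF Ints_add[OF yi yi] Ints_1])
    moreover have "(y/2 + 1/2) + (y/2+1/2) - 1 = y" by simp
    ultimately show False using assms by simp
  qed
  define m where "m = n div 2"
  have "sawtooth (y/2) + sawtooth (y/2 + 1/2) = sawtooth y \<and>
        sawtooth (y/2 + 1/2) - sawtooth (y/2) = (if even n then 1/2 else -1/2)"
  proof (cases "even n")
    case True
    then have nm: "n = 2*m" unfolding m_def by simp
    have f1: "\<lfloor>y/2\<rfloor> = m" using n1 n2 nm by (simp add: floor_eq_iff)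
    have f2: "\<lfloor>y/2 + 1/2\<rfloor> = m" using n1 n2 nm ny by (simp add: floor_eq_iff)
    have s1: "sawtooth (y/2) = y/2 - of_int m - 1/2" using i1 f1 unfolding sawtooth_def by simp
    have s2: "sawtooth (y/2+1/2) = y/2 + 1/2 - of_int m - 1/2" using i2 f2 unfolding sawtooth_def by simp
    have s3: "sawtooth y = y - of_int n - 1/2" using assms unfolding sawtooth_def n_def by simp
    have "(of_int n::real) = 2 * of_int m" using nm by simp
    then show ?thesis using s1 s2 s3 True by simp
  next
    case False
    then have nm: "n = 2*m+1" unfolding m_def by presburger
    have f1: "\<lfloor>y/2\<rfloor> = m" using n1 n2 nm by (simp add: floor_eq_iff)
    have f2: "\<lfloor>y/2 + 1/2\<rfloor> = m + 1" using n1 n2 nm by (simp add: floor_eq_iff)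
    have s1: "sawtooth (y/2) = y/2 - of_int m - 1/2" using i1 f1 unfolding sawtooth_def by simp
    have s2: "sawtooth (y/2+1/2) = y/2 + 1/2 - (of_int m + 1) - 1/2" using i2 f2 unfolding sawtooth_def by simp
    have s3: "sawtooth y = y - of_int n - 1/2" using assms unfolding sawtooth_def n_def by simp
    have "(of_int n::real) = 2 * of_int m + 1" using nm by simp
    then show ?thesis using s1 s2 s3 False by simp
  qed
  then show "sawtooth (y/2) + sawtooth (y/2 + 1/2) = sawtooth y"
    and "sawtooth (y/2 + 1/2) - sawtooth (y/2) = (if even \<lfloor>y\<rfloor> then 1/2 else -1/2)"
    unfolding n_def by auto
qed


lemma floor_neg_nonint: "(x::real) \<notin> \<int> \<Longrightarrow> \<lfloor>-x\<rfloor> = - \<lfloor>x\<rfloor> - 1"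
proof -
  assume False: "x \<notin> \<int>"
  have "of_int \<lfloor>x\<rfloor> \<noteq> x" using False by (metis Ints_of_int)
  then have f1: "of_int \<lfloor>x\<rfloor> < x" and f2: "x < of_int \<lfloor>x\<rfloor> + 1"
    using of_int_floor_le[of x] real_of_int_floor_add_one_gt[of x] by linarith+
  show ?thesis unfolding floor_eq_iff of_int_diff of_int_minus of_int_1 using f1 f2 by linarith
qed

lemma neg1_pow: "0 \<le> n \<Longrightarrow> (-1::int) ^ nat n = (if even n then 1 else -1)"
proof -
  assume "0 \<le> n"
  have "even (nat n) \<longleftrightarrow> even n" using \<open>0 \<le> n\<close> by (simp add: even_nat_iff)
  then show ?thesis by (simp add: power_minus1_even)
qed

lemma two_eq: "(A::real) + B = S \<Longrightarrow> B - A = T \<Longrightarrow> A = (S - T)/2 \<and> B = (S+T)/2"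
  by auto

theorem theorem19:
  fixes h k :: int
  assumes "k > 0" and "gcd h k = 1" and "odd (h + k)"
  shows "real_of_int (B1 h k) = 2 * (1 - of_int h) * (dedekind_sum h k - 2 * dedekind_sum (h + k) (2 * k))"
proof -
  note kpos = assms(1)
  define q where "q = (\<lambda>i. \<lfloor>of_int (h*i) / (of_int k :: real)\<rfloor>)"
  define e where "e = (\<lambda>i::int. (-1::int) ^ nat (i + q i mod 2))"
  define I where "I = {1..k-1::int}"
  have e_if: "e i = (if even (i + q i) then 1 else -1)" if "i \<in> I" for i
  proof -
    have "0 \<le> i + q i mod 2" using that unfolding I_def by simp
    then have "e i = (if even (i + q i mod 2) then 1 else -1)" unfolding e_def by (rule neg1_pow)
    moreover have "even (i + q i mod 2) \<longleftrightarrow> even (i + q i)" by presburger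
    ultimately show ?thesis by simp
  qed
  have B1_eq: "B1 h k = (\<Sum>i\<in>I. e i * q i)" unfolding B1_def e_def q_def I_def by simp
  have nint: "of_int (h*i) / of_int k \<notin> (\<int> :: real set)" if "i \<in> I" for i
    using not_int[OF kpos assms(2)] that unfolding I_def by auto
  have q_refl: "q (k - i) = h - 1 - q i" if "i \<in> I" for i
  proof -
    have "of_int (h*(k-i)) / (of_int k :: real) = - (of_int (h*i) / of_int k) + of_int h"
      using kpos by (simp add: field_simps)
    then have "q (k - i) = \<lfloor>- (of_int (h*i) / of_int k) + (of_int h :: real)\<rfloor>" unfolding q_def by simp
    also have "\<dots> = \<lfloor>- (of_int (h*i) / (of_int k :: real))\<rfloor> + h" by (rule floor_add_int[symmetric])
    also have "\<dots> = h - 1 - q i" using floor_neg_nonint[OF nint[OF that]] unfolding q_def by simp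
    finally show ?thesis .
  qed
  have e_refl: "e (k - i) = e i" if "i \<in> I" for i
  proof -
    have ki: "k - i \<in> I" using that unfolding I_def by auto
    have "even (k - i + q (k - i)) \<longleftrightarrow> even (i + q i)"
      unfolding q_refl[OF that] using assms(3) by presburger
    then show ?thesis using e_if[OF that] e_if[OF ki] by simp
  qed
  have "(\<Sum>i\<in>I. e i * q i) = (\<Sum>i\<in>I. e (k - i) * q (k - i))"
    unfolding I_def by (rule sum.reindex_bij_witness[of _ "\<lambda>j. k - j" "\<lambda>j. k - j"]) auto
  also have "\<dots> = (\<Sum>i\<in>I. (h - 1) * e i - e i * q i)"
    by (rule sum.cong) (simp_all add: e_refl q_refl algebra_simps)
  also have "\<dots> = (h - 1) * (\<Sum>i\<in>I. e i) - (\<Sum>i\<in>I. e i * q i)"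
    by (simp add: sum_subtractf sum_distrib_left)
  finally have B1_2: "2 * B1 h k = (h - 1) * (\<Sum>i\<in>I. e i)" unfolding B1_eq by linarith
  define E where "E = (\<Sum>i\<in>I. real_of_int (e i))"
  have B1r: "real_of_int (B1 h k) = (of_int h - 1) * E / 2"
  proof -
    have "real_of_int (2 * B1 h k) = real_of_int ((h - 1) * (\<Sum>i\<in>I. e i))" using B1_2 by simp
    then show ?thesis unfolding E_def by (simp add: of_int_sum)
  qed
  define s where "s = (\<lambda>i. sawtooth (of_int (h*i) / of_int k))"
  have D1: "dedekind_sum h k = (\<Sum>i\<in>I. (of_int i / of_int k) * s i)"
    unfolding s_def I_def by (rule ded_alt[OF kpos])
  have s0: "(\<Sum>i\<in>I. s i) = 0" unfolding s_def I_def by (rule sum_saw_zero[OF kpos])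
  define H where "H = h + k"
  obtain m where Hm: "H = 2*m + 1" using assms(3) unfolding H_def by (metis oddE)
  define g where "g = (\<lambda>j. (of_int j / of_int (2*k)) * sawtooth (of_int (H*j) / of_int (2*k)))"
  have D2a: "dedekind_sum H (2*k) = (\<Sum>j\<in>{1..2*k-1}. g j)"
    unfolding g_def by (rule ded_alt) (use kpos in simp)
  have split: "{1..2*k-1} = I \<union> {k..2*k-1}" "I \<inter> {k..2*k-1} = {}" unfolding I_def by auto
  have "(\<Sum>j\<in>{1..2*k-1}. g j) = (\<Sum>j\<in>I. g j) + (\<Sum>j\<in>{k..2*k-1}. g j)"
    unfolding split(1) by (rule sum.union_disjoint) (use split(2) in \<open>auto simp: I_def\<close>)
  moreover have "(\<Sum>j\<in>{k..2*k-1}. g j) = (\<Sum>i\<in>{0..k-1}. g (i + k))"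
    by (rule sum.reindex_bij_witness[of _ "\<lambda>j. j + k" "\<lambda>j. j - k"]) auto
  moreover have "{0..k-1} = insert 0 I" unfolding I_def using kpos by auto
  moreover have "0 \<notin> I" unfolding I_def by simp
  moreover have "g k = 0"
  proof -
    have "of_int (H*k) / of_int (2*k) = 1/2 + (of_int m :: real)"
      using kpos Hm by (simp add: field_simps)
    then have "sawtooth (of_int (H*k) / of_int (2*k)) = sawtooth (1/2)" by (simp add: saw_shift)
    also have "\<dots> = 0" by (simp add: saw_small)
    finally show ?thesis unfolding g_def by simp
  qed
  ultimately have D2b: "dedekind_sum H (2*k) = (\<Sum>i\<in>I. g i + g (i + k))"
    unfolding D2a by (simp add: I_def sum.distrib)
  have termeq: "g i + g (i + k) = (of_int i / of_int k) * s i / 2 + s i / 4 + of_int (e i) / 8"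
    if iI: "i \<in> I" for i
  proof -
    define y where "y = of_int (H*i) / (of_int k :: real)"
    have y1: "y = of_int (h*i) / of_int k + of_int i" unfolding y_def H_def using kpos
      by (simp add: field_simps)
    have yn: "y \<notin> \<int>"
    proof
      assume "y \<in> \<int>"
      then have "y - of_int i \<in> \<int>" by (intro Ints_diff) auto
      then show False using nint[OF iI] y1 by simp
    qed
    have sy: "sawtooth y = s i" unfolding y1 s_def by (rule saw_shift)
    have fy: "\<lfloor>y\<rfloor> = q i + i" unfolding y1 q_def by (rule floor_add_int[symmetric])
    have a1: "of_int (H*i) / of_int (2*k) = y/2" unfolding y_def by simp
    have a2: "of_int (H*(i+k)) / of_int (2*k) = (y/2 + 1/2) + (of_int m :: real)"
      unfolding y_def using kpos Hm by (simp add: field_simps)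
    have b2: "sawtooth (of_int (H*(i+k)) / of_int (2*k)) = sawtooth (y/2 + 1/2)"
      unfolding a2 by (rule saw_shift)
    have h1: "sawtooth (y/2) + sawtooth (y/2 + 1/2) = s i" using half_saw(1)[OF yn] sy by simp
    have h2: "sawtooth (y/2 + 1/2) - sawtooth (y/2) = of_int (e i) / 2"
      using half_saw(2)[OF yn] fy e_if[OF iI] by (simp add: add.commute)
    have sa: "sawtooth (y/2) = (s i - of_int (e i) / 2) / 2" using two_eq[OF h1 h2] by blast
    have sb: "sawtooth (y/2 + 1/2) = (s i + of_int (e i) / 2) / 2" using two_eq[OF h1 h2] by blast
    have "g i + g (i + k) = (of_int i / of_int (2*k)) * sawtooth (y/2)
                           + (of_int (i+k) / of_int (2*k)) * sawtooth (y/2 + 1/2)"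
      unfolding g_def a1 b2 by simp
    also have "\<dots> = (of_int i / of_int k) * s i / 2 + s i / 4 + of_int (e i) / 8"
      unfolding sa sb using kpos by (simp add: field_simps)
    finally show ?thesis .
  qed
  have D2: "dedekind_sum (h + k) (2*k) = dedekind_sum h k / 2 + E / 8"
  proof -
    have "dedekind_sum (h + k) (2*k) = (\<Sum>i\<in>I. (of_int i / of_int k) * s i / 2 + s i / 4 + of_int (e i) / 8)"
      using D2b termeq unfolding H_def by simp
    also have "\<dots> = (\<Sum>i\<in>I. (of_int i / of_int k) * s i) / 2 + (\<Sum>i\<in>I. s i) / 4 + E / 8"
      unfolding E_def by (simp add: sum.distrib sum_divide_distrib)
    finally show ?thesis using D1 s0 by simp
  qed
  show ?thesis unfolding B1r D2 by (simp add: field_simps)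
qed

end
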